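(* In the Setting below and under the Standing Assumption, for each fixed $p\in\mathbb{Z}$ there exists a constant $C\ge 0$ depending on $f$ such that $m_{min}(x,N,p)\le C\cdot N+o(N)$ as $N\to\infty$, for all $x\in\mathbb{Q}\cap D$. Consequently $\sigma(x,p)\le C$ for all $x\in\mathbb{Q}\cap D$, and the same bound holds for $\sigma(x)$ whenever it exists.
   Context: Setting. $D\subseteq\mathbb{R}$ is a compact interval and $f:D\to D$ is twice continuously differentiable on $D$ with $f''$ bounded. For $x\in D$ the orbit is $x_0=x$, $x_{n+1}=f(x_n)$. A floating-point number of precision $m$ is a real $s\cdot 2^{e-m}$ with $s,e\in\mathbb{Z}$, $|s|\le 2^m-1$; $rd_m(y)$ denotes rounding of $y$ to a nearest floating-point number of precision $m$. Let $L(a,e):=\sup\{|f'(y)|: y\in[a-e,a+e]\cap D\}$ and fix a function $\bar L$ with $L(a,e)\le\bar L(a,e)\le\min(\bar L_{max},\,L(a,e)+Ke)$ for constants $\bar L_{max},K\ge0$. For $x\in\mathbb{Q}\cap D$ and precision $m\ge1$ the computed sequence is $\hat x_0=rd_m(x)$, $\bar e_0=2^{-m}|\hat x_0|$, $\hat x_{n+1}=rd_m(f(\hat x_n))$, $\bar e_{n+1}=\bar L(\hat x_n,\bar e_n)\bar e_n+2^{-m}|\hat x_{n+1}|$ (all $\hat x_n$ assumed in $D$). For $N\in\mathbb{N}$, $p\in\mathbb{Z}$, $m_{min}(x,N,p)$ is the least $m\ge1$ such that the sequence computed at precision $m$ satisfies $\bar e_n\le\frac{10^{-p}}{1+10^{-p}}|\hat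 x_n|$ for all $n=0,\dots,N$. The loss of significance rate: $\sigma(x,p):=\limsup_{N\to\infty} m_{min}(x,N,p)/N$ and $\sigma(x):=\lim_{p\to\infty}\sigma(x,p)$. Standing Assumption: for the orbit of $x$, $x_n\ne0$ for all $n$ and $\lim_{N\to\infty}\mathrm{ld}(\min\{|x_n|:0\le n\le N\})/N=0$, where $\mathrm{ld}=\log_2$. *)

theory Defs
  imports "HOL-Analysis.Analysis"
begin

definition is_float :: "nat \<Rightarrow> real \<Rightarrow> bool" where
  "is_float m y \<longleftrightarrow> (\<exists>s e :: int. \<bar>s\<bar> \<le> 2 ^ m - 1 \<and>
       y = real_of_int s * 2 powr (real_of_int e - real m))"

definition is_rounding :: "(nat \<Rightarrow> real \<Rightarrow> real) \<Rightarrow> bool" where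
  "is_rounding rd \<longleftrightarrow> (\<forall>m y. m \<ge> 1 \<longrightarrow> is_float m (rd m y) \<and>
       (\<forall>z. is_float m z \<longrightarrow> \<bar>rd m y - y\<bar> \<le> \<bar>z - y\<bar>))"

definition Lsup :: "(real \<Rightarrow> real) \<Rightarrow> real set \<Rightarrow> real \<Rightarrow> real \<Rightarrow> real" where
  "Lsup df D a e = Sup ((\<lambda>y. \<bar>df y\<bar>) ` ({a - e..a + e} \<inter> D))"

text \<open>The computed sequence (hat x_n, bar e_n) at precision m.\<close>
primrec comp_seq :: "(real \<Rightarrow> real) \<Rightarrow> (real \<Rightarrow> real \<Rightarrow> real) \<Rightarrow> (nat \<Rightarrow> real \<Rightarrow> real)
    \<Rightarrow> nat \<Rightarrow> real \<Rightarrow> nat \<Rightarrow> real \<times> real" where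
  "comp_seq f Lb rd m x 0 = (rd m x, 2 powr (- real m) * \<bar>rd m x\<bar>)"
| "comp_seq f Lb rd m x (Suc n) =
     (let xh = fst (comp_seq f Lb rd m x n); e = snd (comp_seq f Lb rd m x n);
          xh' = rd m (f xh)
      in (xh', Lb xh e * e + 2 powr (- real m) * \<bar>xh'\<bar>))"

definition admissible :: "(real \<Rightarrow> real) \<Rightarrow> (real \<Rightarrow> real \<Rightarrow> real) \<Rightarrow> (nat \<Rightarrow> real \<Rightarrow> real)
    \<Rightarrow> real \<Rightarrow> nat \<Rightarrow> int \<Rightarrow> nat \<Rightarrow> bool" where
  "admissible f Lb rd x N p m \<longleftrightarrow> m \<ge> 1 \<and>
     (\<forall>n\<le>N. snd (comp_seq f Lb rd m x n)
        \<le> 10 powr (- real_of_int p) / (1 + 10 powr (- real_of_int p)) * \<bar>fst (comp_seq f Lb rd m x n)\<bar>)"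

definition m_min :: "(real \<Rightarrow> real) \<Rightarrow> (real \<Rightarrow> real \<Rightarrow> real) \<Rightarrow> (nat \<Rightarrow> real \<Rightarrow> real)
    \<Rightarrow> real \<Rightarrow> nat \<Rightarrow> int \<Rightarrow> nat" where
  "m_min f Lb rd x N p = (LEAST m. admissible f Lb rd x N p m)"

definition sigma_p :: "(real \<Rightarrow> real) \<Rightarrow> (real \<Rightarrow> real \<Rightarrow> real) \<Rightarrow> (nat \<Rightarrow> real \<Rightarrow> real)
    \<Rightarrow> real \<Rightarrow> int \<Rightarrow> ereal" where
  "sigma_p f Lb rd x p = limsup (\<lambda>N. ereal (real (m_min f Lb rd x N p) / real N))"

definition standing_assumption :: "(real \<Rightarrow> real) \<Rightarrow> real \<Rightarrow> bool" where
  "standing_assumption f x \<longleftrightarrow> (\<forall>n. (f ^^ n) x \<noteq> 0) \<and>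
     ((\<lambda>N. log 2 (Min ((\<lambda>n. \<bar>(f ^^ n) x\<bar>) ` {0..N})) / real N) \<longlonglongrightarrow> 0)"

end

theory Submission
  imports Defs "HOL-Real_Asymp.Real_Asymp"
begin


lemma float_neg: "is_float m z \<Longrightarrow> is_float m (- z)"
  unfolding is_float_def
  by (metis abs_minus_cancel mult_minus_left of_int_minus)

lemma float_zero: "is_float m 0"
  unfolding is_float_def by (rule exI[of _ 0]) auto

lemma exists_float_pos:
  assumes y: "y > 0" and m: "m \<ge> 1"
  shows "\<exists>z. is_float m z \<and> \<bar>z - y\<bar> \<le> 4 * 2 powr (- real m) * y"
proof -
  define k where "k = \<lfloor>log 2 y\<rfloor>"
  have k1: "2 powr k \<le> y"
  proof -
    have "real_of_int k \<le> log 2 y" unfolding k_def by simp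
    hence "2 powr k \<le> 2 powr (log 2 y)" by simp
    thus ?thesis using y by simp
  qed
  have k2: "y < 2 powr (k + 1)"
  proof -
    have "log 2 y < real_of_int k + 1" unfolding k_def by linarith
    hence "2 powr (log 2 y) < 2 powr (k+1)" by simp
    thus ?thesis using y by simp
  qed
  define h where "h = 2 powr (real_of_int (k + 2) - real m)"
  have hpos: "h > 0" unfolding h_def by simp
  define s where "s = \<lfloor>y / h\<rfloor>"
  have yh: "y / h < 2 powr (real m - 1)"
  proof -
    have "y / h = y * 2 powr (real m - k - 2)"
      unfolding h_def by (simp add: divide_powr_uminus powr_minus_divide[symmetric] algebra_simps)
    also have "\<dots> < 2 powr (k+1) * 2 powr (real m - k - 2)"
      using k2 by (intro mult_strict_right_mono) auto
    also have "\<dots> = 2 powr (real m - 1)" by (simp add: powr_add[symmetric])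
    finally show ?thesis .
  qed
  have s0: "s \<ge> 0" unfolding s_def using y hpos by simp
  have "real_of_int s < 2 powr (real m - 1)" unfolding s_def using yh by linarith
  also have "2 powr (real m - 1) = 2 ^ (m - 1)"
    using m by (simp add: powr_realpow[symmetric] of_nat_diff)
  finally have "s < 2 ^ (m - 1)" by (metis of_int_less_iff of_int_numeral of_int_power)
  moreover have "(2::int) ^ (m - 1) \<le> 2 ^ m - 1"
  proof -
    have "(2::int) ^ m = 2 * 2 ^ (m - 1)" using m by (metis Suc_diff_1 less_le_trans power_Suc zero_less_one)
    moreover have "(1::int) \<le> 2 ^ (m-1)" by simp
    ultimately show ?thesis by linarith
  qed
  ultimately have sb: "\<bar>s\<bar> \<le> 2 ^ m - 1" using s0 abs_of_nonneg[OF s0] by linarith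
  define z where "z = real_of_int s * h"
  have fl: "is_float m z" unfolding is_float_def z_def h_def using sb by blast
  have "s * h \<le> y" unfolding s_def using hpos
    by (metis floor_divide_lower)
  moreover have "y < (s + 1) * h" unfolding s_def using hpos
    by (metis floor_divide_upper of_int_1 of_int_add)
  ultimately have "\<bar>z - y\<bar> \<le> h" unfolding z_def by (simp add: algebra_simps)
  also have "h = 4 * 2 powr (- real m) * 2 powr k"
    unfolding h_def by (simp add: powr_diff powr_add powr_minus divide_inverse)
  also have "\<dots> \<le> 4 * 2 powr (- real m) * y" using k1 by simp
  finally show ?thesis using fl by blast
qed

lemma rd_err:
  assumes rd: "is_rounding rd" and m: "m \<ge> 1"
  shows "\<bar>rd m y - y\<bar> \<le> 4 * 2 powr (- real m) * \<bar>y\<bar>"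
proof -
  have near: "\<And>z. is_float m z \<Longrightarrow> \<bar>rd m y - y\<bar> \<le> \<bar>z - y\<bar>"
    using rd m unfolding is_rounding_def by blast
  consider "y = 0" | "y > 0" | "y < 0" by linarith
  thus ?thesis
  proof cases
    case 1 thus ?thesis using near[OF float_zero] by simp
  next
    case 2 thus ?thesis using exists_float_pos[OF 2 m] near by fastforce
  next
    case 3
    then obtain z where z: "is_float m z" "\<bar>z - (-y)\<bar> \<le> 4 * 2 powr (- real m) * (-y)"
      using exists_float_pos[of "-y" m] m by auto
    have "\<bar>rd m y - y\<bar> \<le> \<bar>(-z) - y\<bar>" using near[OF float_neg[OF z(1)]] .
    also have "\<dots> = \<bar>z - (-y)\<bar>" by simp
    finally show ?thesis using z 3 by simp
  qed
qed


lemma orbit_in: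
  assumes maps: "\<forall>y\<in>{a..b}. f y \<in> {a..b}" and x: "x \<in> {a..b}"
  shows "(f ^^ n) x \<in> {a..b}"
  by (induction n) (use maps x in auto)

lemma err_bound:
  fixes f :: "real \<Rightarrow> real" and Lb :: "real \<Rightarrow> real \<Rightarrow> real"
  assumes Lip: "\<forall>u\<in>{a..b}. \<forall>v\<in>{a..b}. \<bar>f u - f v\<bar> \<le> G * \<bar>u - v\<bar>"
    and G: "G \<le> \<Lambda>" "1 \<le> \<Lambda>"
    and Lbb: "\<forall>y\<in>{a..b}. \<forall>e\<ge>0. 0 \<le> Lb y e \<and> Lb y e \<le> \<Lambda>"
    and maps: "\<forall>y\<in>{a..b}. f y \<in> {a..b}"
    and M: "\<forall>y\<in>{a..b}. \<bar>y\<bar> \<le> M"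
    and rde: "\<forall>y. \<bar>rd m y - y\<bar> \<le> 4 * 2 powr (- real m) * \<bar>y\<bar>"
    and x: "x \<in> {a..b}"
    and xh: "\<forall>n. fst (comp_seq f Lb rd m x n) \<in> {a..b}"
  shows "0 \<le> snd (comp_seq f Lb rd m x n) \<and>
         snd (comp_seq f Lb rd m x n) \<le> 4 * 2 powr (- real m) * M * (n + 1) * \<Lambda> ^ n \<and>
         \<bar>fst (comp_seq f Lb rd m x n) - (f ^^ n) x\<bar> \<le> 4 * 2 powr (- real m) * M * (n + 1) * \<Lambda> ^ n"
proof (induction n)
  case 0
  define q where "q = 2 powr (- real m)"
  have q: "q > 0" unfolding q_def by simp
  have r0: "rd m x \<in> {a..b}" using xh[rule_format, of 0] by simp
  have "\<bar>rd m x\<bar> \<le> M" using M r0 by blast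
  moreover have "\<bar>x\<bar> \<le> M" using M x by blast
  moreover have "\<bar>rd m x - x\<bar> \<le> 4 * q * \<bar>x\<bar>" using rde unfolding q_def by blast
  moreover note q
  ultimately have a1: "q * \<bar>rd m x\<bar> \<le> 4 * q * M" and a2: "\<bar>rd m x - x\<bar> \<le> 4 * q * M"
    and a3: "0 \<le> q * \<bar>rd m x\<bar>"
    by (auto intro: order.trans mult_left_mono simp: mult.assoc)
  show ?case using a1 a2 a3 unfolding q_def by simp
next
  case (Suc n)
  define q where "q = 2 powr (- real m)"
  have q: "q > 0" unfolding q_def by simp
  define xh where "xh = fst (comp_seq f Lb rd m x n)"
  define e where "e = snd (comp_seq f Lb rd m x n)"
  define B where "B = 4 * q * M * (n + 1) * \<Lambda> ^ n"
  have IH: "0 \<le> e" "e \<le> B" "\<bar>xh - (f ^^ n) x\<bar> \<le> B"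
    using Suc.IH unfolding xh_def e_def B_def q_def by auto
  have xhD: "xh \<in> {a..b}" using xh unfolding xh_def by blast
  have xnD: "(f ^^ n) x \<in> {a..b}" using orbit_in[OF maps x] .
  have M0: "0 \<le> M" using M xhD by force
  have B0: "0 \<le> B" unfolding B_def using q M0 G by simp
  have cs: "comp_seq f Lb rd m x (Suc n) = (rd m (f xh), Lb xh e * e + q * \<bar>rd m (f xh)\<bar>)"
    unfolding xh_def e_def q_def by (simp add: Let_def)
  have x1D: "rd m (f xh) \<in> {a..b}" using xh[rule_format, of "Suc n"] cs by simp
  have M1: "\<bar>rd m (f xh)\<bar> \<le> M" using M x1D by blast
  have M2: "\<bar>f xh\<bar> \<le> M" using M maps xhD by blast
  have Lbx: "0 \<le> Lb xh e" "Lb xh e \<le> \<Lambda>" using Lbb xhD IH(1) by auto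
  have Lp: "\<Lambda> ^ (Suc n) \<ge> 1" using G(2) one_le_power by blast
  have Bs: "4 * q * M * (Suc n + 1) * \<Lambda> ^ Suc n = 4 * q * M * \<Lambda> ^ Suc n + \<Lambda> * B"
    unfolding B_def by (simp add: algebra_simps)
  have qM: "q * M \<le> 4 * q * M * \<Lambda> ^ Suc n"
  proof -
    have "q * M * 1 \<le> q * M * (4 * \<Lambda> ^ Suc n)" using Lp q M0
      by (intro mult_left_mono) auto
    thus ?thesis by (simp add: algebra_simps)
  qed
  have "Lb xh e * e \<le> \<Lambda> * B" using Lbx IH(1,2) G by (intro mult_mono) auto
  hence e1: "Lb xh e * e + q * \<bar>rd m (f xh)\<bar> \<le> 4 * q * M * (Suc n + 1) * \<Lambda> ^ Suc n"
    using Bs qM mult_left_mono[OF M1, of q] q by linarith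
  have e0: "0 \<le> Lb xh e * e + q * \<bar>rd m (f xh)\<bar>" using Lbx IH(1) q by simp
  have "\<bar>rd m (f xh) - f xh\<bar> \<le> 4 * q * \<bar>f xh\<bar>" using rde unfolding q_def by blast
  also have "\<dots> \<le> 4 * q * M * \<Lambda> ^ Suc n"
  proof -
    have "4 * q * \<bar>f xh\<bar> * 1 \<le> 4 * q * M * \<Lambda> ^ Suc n"
      using M2 Lp q M0 by (intro mult_mono) auto
    thus ?thesis by simp
  qed
  finally have r1: "\<bar>rd m (f xh) - f xh\<bar> \<le> 4 * q * M * \<Lambda> ^ Suc n" .
  have "\<bar>f xh - f ((f ^^ n) x)\<bar> \<le> G * \<bar>xh - (f ^^ n) x\<bar>" using Lip xhD xnD by blast
  also have "\<dots> \<le> \<Lambda> * B" using G IH(3) B0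
  proof -
    have "G * \<bar>xh - (f ^^ n) x\<bar> \<le> \<Lambda> * \<bar>xh - (f ^^ n) x\<bar>"
      using G(1) by (intro mult_right_mono) auto
    also have "\<dots> \<le> \<Lambda> * B" using G(2) IH(3) by (intro mult_left_mono) auto
    finally show ?thesis .
  qed
  finally have r2: "\<bar>f xh - f ((f ^^ n) x)\<bar> \<le> \<Lambda> * B" .
  have "\<bar>rd m (f xh) - (f ^^ Suc n) x\<bar> \<le> 4 * q * M * (Suc n + 1) * \<Lambda> ^ Suc n"
    using r1 r2 Bs by simp
  thus ?case using cs e1 e0 unfolding q_def by simp
qed


lemma adm_suff:
  fixes f :: "real \<Rightarrow> real" and Lb :: "real \<Rightarrow> real \<Rightarrow> real"
  assumes Lip: "\<forall>u\<in>{a..b}. \<forall>v\<in>{a..b}. \<bar>f u - f v\<bar> \<le> G * \<bar>u - v\<bar>"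
    and G: "G \<le> \<Lambda>" "1 \<le> \<Lambda>"
    and Lbb: "\<forall>y\<in>{a..b}. \<forall>e\<ge>0. 0 \<le> Lb y e \<and> Lb y e \<le> \<Lambda>"
    and maps: "\<forall>y\<in>{a..b}. f y \<in> {a..b}"
    and M: "\<forall>y\<in>{a..b}. \<bar>y\<bar> \<le> M"
    and rde: "\<forall>y. \<bar>rd m y - y\<bar> \<le> 4 * 2 powr (- real m) * \<bar>y\<bar>"
    and x: "x \<in> {a..b}"
    and xh: "\<forall>n. fst (comp_seq f Lb rd m x n) \<in> {a..b}"
    and m: "m \<ge> 1"
    and mu: "\<forall>n\<le>N. \<mu> \<le> \<bar>(f ^^ n) x\<bar>"
    and key: "(1 + c) * (4 * 2 powr (- real m) * M * (N + 1) * \<Lambda> ^ N) \<le> c * \<mu>"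
    and c: "c = 10 powr (- real_of_int p) / (1 + 10 powr (- real_of_int p))"
  shows "admissible f Lb rd x N p m"
  unfolding admissible_def
proof (intro conjI m allI impI)
  fix n assume n: "n \<le> N"
  define BN where "BN = 4 * 2 powr (- real m) * M * (N + 1) * \<Lambda> ^ N"
  have c0: "0 \<le> c" unfolding c by simp
  have M0: "0 \<le> M" using M x by force
  note eb = err_bound[OF Lip G Lbb maps M rde x xh, of n]
  have mono: "4 * 2 powr (- real m) * M * (n + 1) * \<Lambda> ^ n \<le> BN"
  proof -
    have "(real n + 1) * \<Lambda> ^ n \<le> (real N + 1) * \<Lambda> ^ N"
      using n G(2) by (intro mult_mono power_increasing) auto
    hence "4 * 2 powr (- real m) * M * ((real n + 1) * \<Lambda> ^ n) \<le> 4 * 2 powr (- real m) * M * ((real N + 1) * \<Lambda> ^ N)"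
      using M0 by (intro mult_left_mono) auto
    thus ?thesis unfolding BN_def by (simp add: mult.assoc add.commute)
  qed
  have e1: "snd (comp_seq f Lb rd m x n) \<le> BN" using eb mono by linarith
  have e2: "\<bar>fst (comp_seq f Lb rd m x n) - (f ^^ n) x\<bar> \<le> BN" using eb mono by linarith
  have "\<mu> \<le> \<bar>(f ^^ n) x\<bar>" using mu n by blast
  hence low: "\<mu> - BN \<le> \<bar>fst (comp_seq f Lb rd m x n)\<bar>" using e2 by linarith
  have "BN \<le> c * (\<mu> - BN)" using key unfolding BN_def by (simp add: algebra_simps)
  also have "\<dots> \<le> c * \<bar>fst (comp_seq f Lb rd m x n)\<bar>" using low c0 by (intro mult_left_mono)
  finally show "snd (comp_seq f Lb rd m x n)
        \<le> 10 powr (- real_of_int p) / (1 + 10 powr (- real_of_int p)) * \<bar>fst (comp_seq f Lb rd m x n)\<bar>"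
    using e1 c by simp
qed


lemma asym:
  fixes \<mu> :: "nat \<Rightarrow> real" and K0 \<Lambda> :: real
  assumes mupos: "\<forall>N. \<mu> N > 0"
    and lim: "(\<lambda>N. log 2 (\<mu> N) / real N) \<longlonglongrightarrow> 0"
    and K0: "K0 > 0" and L: "\<Lambda> \<ge> 1"
  shows "\<forall>N. K0 * (real N + 1) * \<Lambda> ^ N / \<mu> N
              \<le> 2 powr real (nat \<lceil>log 2 (K0 * (real N + 1) * \<Lambda> ^ N / \<mu> N)\<rceil> + 1)"
    and "\<forall>\<epsilon>>0. eventually (\<lambda>N. real (nat \<lceil>log 2 (K0 * (real N + 1) * \<Lambda> ^ N / \<mu> N)\<rceil> + 1)
              \<le> (log 2 \<Lambda> + \<epsilon>) * real N) sequentially"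
proof -
  define A where "A N = K0 * (real N + 1) * \<Lambda> ^ N / \<mu> N" for N
  have Apos: "A N > 0" for N unfolding A_def using K0 L mupos by simp
  show "\<forall>N. K0 * (real N + 1) * \<Lambda> ^ N / \<mu> N
              \<le> 2 powr real (nat \<lceil>log 2 (K0 * (real N + 1) * \<Lambda> ^ N / \<mu> N)\<rceil> + 1)"
  proof
    fix N
    have "A N = 2 powr (log 2 (A N))" using Apos by simp
    also have "\<dots> \<le> 2 powr real (nat \<lceil>log 2 (A N)\<rceil> + 1)"
      by (intro powr_mono) linarith+
    finally show "K0 * (real N + 1) * \<Lambda> ^ N / \<mu> N
              \<le> 2 powr real (nat \<lceil>log 2 (K0 * (real N + 1) * \<Lambda> ^ N / \<mu> N)\<rceil> + 1)"
      unfolding A_def .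
  qed
  have logA: "log 2 (A N) = log 2 K0 + log 2 (real N + 1) + real N * log 2 \<Lambda> - log 2 (\<mu> N)" for N
  proof -
    have m: "\<mu> N > 0" using mupos by blast
    have l: "\<Lambda> ^ N > 0" using L by simp
    have "log 2 (A N) = log 2 (K0 * (real N + 1) * \<Lambda> ^ N) - log 2 (\<mu> N)"
      unfolding A_def by (rule log_divide_pos) (use K0 l m in auto)
    also have "log 2 (K0 * (real N + 1) * \<Lambda> ^ N) = log 2 K0 + log 2 (real N + 1) + log 2 (\<Lambda> ^ N)"
      using K0 l by (simp add: log_mult_pos)
    also have "log 2 (\<Lambda> ^ N) = real N * log 2 \<Lambda>" using L by (simp add: log_nat_power)
    finally show ?thesis .
  qed
  define g where "g N = max 0 (log 2 (A N) / real N) + 2 / real N" for N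
  have lim1: "(\<lambda>N. log 2 K0 / real N) \<longlonglongrightarrow> 0" by real_asymp
  have lim2: "(\<lambda>N::nat. log 2 (real N + 1) / real N) \<longlonglongrightarrow> 0" by real_asymp
  have lim3: "(\<lambda>N::nat. 2 / real N) \<longlonglongrightarrow> 0" by real_asymp
  have eq: "\<forall>\<^sub>F N in sequentially. log 2 (A N) / real N
      = log 2 K0 / real N + log 2 (real N + 1) / real N + log 2 \<Lambda> - log 2 (\<mu> N) / real N"
    using eventually_gt_at_top[of 0]
    by eventually_elim (simp add: logA add_divide_distrib diff_divide_distrib)
  have "(\<lambda>N. log 2 K0 / real N + log 2 (real N + 1) / real N + log 2 \<Lambda> - log 2 (\<mu> N) / real N)
        \<longlonglongrightarrow> 0 + 0 + log 2 \<Lambda> - 0"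
    by (intro tendsto_intros lim1 lim2 lim)
  hence "(\<lambda>N. log 2 (A N) / real N) \<longlonglongrightarrow> log 2 \<Lambda>"
    using tendsto_cong[OF eq] by simp
  hence "g \<longlonglongrightarrow> max 0 (log 2 \<Lambda>) + 0"
    unfolding g_def by (intro tendsto_intros lim3)
  moreover have "max 0 (log 2 \<Lambda>) = log 2 \<Lambda>" using L by simp
  ultimately have gl: "g \<longlonglongrightarrow> log 2 \<Lambda>" by simp
  show "\<forall>\<epsilon>>0. eventually (\<lambda>N. real (nat \<lceil>log 2 (K0 * (real N + 1) * \<Lambda> ^ N / \<mu> N)\<rceil> + 1)
              \<le> (log 2 \<Lambda> + \<epsilon>) * real N) sequentially"
  proof (intro allI impI)
    fix \<epsilon> :: real assume e: "\<epsilon> > 0"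
    have ev: "eventually (\<lambda>N. g N < log 2 \<Lambda> + \<epsilon>) sequentially"
      using order_tendstoD(2)[OF gl, of "log 2 \<Lambda> + \<epsilon>"] e by simp
    have "eventually (\<lambda>N. real (nat \<lceil>log 2 (A N)\<rceil> + 1) \<le> (log 2 \<Lambda> + \<epsilon>) * real N) sequentially"
      using ev eventually_gt_at_top[of 0]
    proof eventually_elim
      case (elim N)
      have N: "real N > 0" using elim by simp
      have "real (nat \<lceil>log 2 (A N)\<rceil> + 1) \<le> max 0 (log 2 (A N)) + 2" by linarith
      also have "\<dots> = g N * real N"
      proof -
        have "max 0 (log 2 (A N) / real N) * real N = max 0 (log 2 (A N))"
          using N by (cases "log 2 (A N) \<ge> 0") (auto simp: max_def divide_nonneg_pos zero_le_divide_iff)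
        thus ?thesis unfolding g_def using N by (simp add: distrib_right)
      qed
      also have "\<dots> \<le> (log 2 \<Lambda> + \<epsilon>) * real N"
        using elim N by (intro mult_right_mono) auto
      finally show ?case .
    qed
    thus "eventually (\<lambda>N. real (nat \<lceil>log 2 (K0 * (real N + 1) * \<Lambda> ^ N / \<mu> N)\<rceil> + 1)
              \<le> (log 2 \<Lambda> + \<epsilon>) * real N) sequentially" unfolding A_def .
  qed
qed


theorem mainTheorem5:
  fixes a b :: real and f df ddf :: "real \<Rightarrow> real"
    and Lb :: "real \<Rightarrow> real \<Rightarrow> real" and Lmax K :: real
    and rd :: "nat \<Rightarrow> real \<Rightarrow> real"
  assumes ab: "a \<le> b"
    and maps: "\<forall>y\<in>{a..b}. f y \<in> {a..b}"
    and d1: "\<forall>y\<in>{a..b}. (f has_real_derivative df y) (at y within {a..b})"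
    and d2: "\<forall>y\<in>{a..b}. (df has_real_derivative ddf y) (at y within {a..b})"
    and d2cont: "continuous_on {a..b} ddf"
    and d2bdd: "bounded (ddf ` {a..b})"
    and LK_nonneg: "Lmax \<ge> 0" "K \<ge> 0"
    and Lb: "\<forall>y\<in>{a..b}. \<forall>e\<ge>0. Lsup df {a..b} y e \<le> Lb y e \<and>
                 Lb y e \<le> min Lmax (Lsup df {a..b} y e + K * e)"
    and rd: "is_rounding rd"
  shows "\<exists>C\<ge>0. \<forall>p::int. \<forall>x\<in>\<rat> \<inter> {a..b}.
           standing_assumption f x \<longrightarrow>
           (\<forall>m\<ge>1. \<forall>n. fst (comp_seq f Lb rd m x n) \<in> {a..b}) \<longrightarrow>
           ((\<forall>\<epsilon>>0. eventually (\<lambda>N. (\<exists>m. admissible f Lb rd x N p m) \<and>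
                 real (m_min f Lb rd x N p) \<le> (C + \<epsilon>) * real N) sequentially)
            \<and> sigma_p f Lb rd x p \<le> ereal C
            \<and> (\<forall>l. ((\<lambda>q. sigma_p f Lb rd x q) \<longlongrightarrow> l) at_top \<longrightarrow> l \<le> ereal C))"
proof -
  have dfc: "continuous_on {a..b} df"
    using d2 by (auto simp: continuous_on_eq_continuous_within intro: DERIV_continuous)
  have "bounded (df ` {a..b})"
    by (intro compact_imp_bounded compact_continuous_image dfc) simp
  then obtain G0 where G0: "\<forall>y\<in>{a..b}. \<bar>df y\<bar> \<le> G0" unfolding bounded_real by blast
  define G where "G = max 0 G0"
  have Gb: "\<forall>y\<in>{a..b}. \<bar>df y\<bar> \<le> G" using G0 unfolding G_def by force
  have Lip: "\<forall>u\<in>{a..b}. \<forall>v\<in>{a..b}. \<bar>f u - f v\<bar> \<le> G * \<bar>u - v\<bar>"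
  proof (intro ballI)
    fix u v assume u: "u \<in> {a..b}" and v: "v \<in> {a..b}"
    have "norm (f u - f v) \<le> G * norm (u - v)"
      by (rule field_differentiable_bound[where f' = df and S = "{a..b}"])
         (use d1 Gb u v in auto)
    thus "\<bar>f u - f v\<bar> \<le> G * \<bar>u - v\<bar>" by simp
  qed
  define \<Lambda> where "\<Lambda> = max 1 (max Lmax G)"
  have L1: "1 \<le> \<Lambda>" and LG: "G \<le> \<Lambda>" and LL: "Lmax \<le> \<Lambda>" unfolding \<Lambda>_def by auto
  define C where "C = log 2 \<Lambda>"
  have C0: "C \<ge> 0" unfolding C_def using L1 by simp
  have Lbb: "\<forall>y\<in>{a..b}. \<forall>e\<ge>0. 0 \<le> Lb y e \<and> Lb y e \<le> \<Lambda>"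
  proof (intro ballI allI impI conjI)
    fix y e :: real assume y: "y \<in> {a..b}" and e: "e \<ge> 0"
    have "\<bar>df y\<bar> \<le> Lsup df {a..b} y e"
      unfolding Lsup_def
    proof (rule cSup_upper)
      show "\<bar>df y\<bar> \<in> (\<lambda>y. \<bar>df y\<bar>) ` ({y - e..y + e} \<inter> {a..b})" using y e by auto
      show "bdd_above ((\<lambda>y. \<bar>df y\<bar>) ` ({y - e..y + e} \<inter> {a..b}))"
        using Gb by (auto intro!: bdd_aboveI[of _ G])
    qed
    moreover have "Lsup df {a..b} y e \<le> Lb y e" "Lb y e \<le> Lmax" using Lb y e by auto
    ultimately show "0 \<le> Lb y e" "Lb y e \<le> \<Lambda>" using LL by linarith+
  qed
  define M where "M = max 1 (max \<bar>a\<bar> \<bar>b\<bar>)"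
  have M: "\<forall>y\<in>{a..b}. \<bar>y\<bar> \<le> M" unfolding M_def by auto
  have M1: "M \<ge> 1" unfolding M_def by simp
  show ?thesis
  proof (rule exI[of _ C], rule conjI[OF C0], intro allI ballI impI)
    fix p0 :: int and x assume xQ: "x \<in> \<rat> \<inter> {a..b}" and st: "standing_assumption f x"
      and xh: "\<forall>m\<ge>1. \<forall>n. fst (comp_seq f Lb rd m x n) \<in> {a..b}"
    have x: "x \<in> {a..b}" using xQ by blast
    have evq: "\<forall>\<epsilon>>0. eventually (\<lambda>N. (\<exists>m. admissible f Lb rd x N p m) \<and>
                 real (m_min f Lb rd x N p) \<le> (C + \<epsilon>) * real N) sequentially" for p
    proof -
    define c where "c = 10 powr (- real_of_int p) / (1 + 10 powr (- real_of_int p))"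
    have c0: "c > 0" unfolding c_def by (simp add: add_pos_pos)
    define \<mu> where "\<mu> N = Min ((\<lambda>n. \<bar>(f ^^ n) x\<bar>) ` {0..N})" for N
    have nz: "\<forall>n. (f ^^ n) x \<noteq> 0" using st unfolding standing_assumption_def by blast
    have mupos: "\<forall>N. \<mu> N > 0" unfolding \<mu>_def using nz by auto
    have mule: "\<forall>n\<le>N. \<mu> N \<le> \<bar>(f ^^ n) x\<bar>" for N unfolding \<mu>_def by auto
    have lim: "(\<lambda>N. log 2 (\<mu> N) / real N) \<longlonglongrightarrow> 0"
      using st unfolding standing_assumption_def \<mu>_def by blast
    define K0 where "K0 = 4 * M * (1 + c) / c"
    have K0: "K0 > 0" unfolding K0_def using M1 c0 by simp
    define mm where "mm N = nat \<lceil>log 2 (K0 * (real N + 1) * \<Lambda> ^ N / \<mu> N)\<rceil> + 1" for N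
    note as = asym[OF mupos lim K0 L1, folded mm_def]
    have adm: "admissible f Lb rd x N p (mm N)" for N
    proof -
      have m1: "mm N \<ge> 1" unfolding mm_def by simp
      have rde: "\<forall>y. \<bar>rd (mm N) y - y\<bar> \<le> 4 * 2 powr (- real (mm N)) * \<bar>y\<bar>"
        using rd_err[OF rd m1] by blast
      have xhN: "\<forall>n. fst (comp_seq f Lb rd (mm N) x n) \<in> {a..b}" using xh m1 by blast
      have A: "K0 * (real N + 1) * \<Lambda> ^ N / \<mu> N \<le> 2 powr real (mm N)" using as(1) by blast
      have A2: "K0 * (real N + 1) * \<Lambda> ^ N \<le> 2 powr real (mm N) * \<mu> N"
        using A mupos by (simp add: divide_le_eq)
      have "(1 + c) * (4 * 2 powr (- real (mm N)) * M * (real N + 1) * \<Lambda> ^ N)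
          = 2 powr (- real (mm N)) * c * (K0 * (real N + 1) * \<Lambda> ^ N)"
      proof -
        have ck: "c * K0 = 4 * M * (1 + c)" unfolding K0_def using c0 by simp
        have "2 powr (- real (mm N)) * c * (K0 * (real N + 1) * \<Lambda> ^ N)
            = 2 powr (- real (mm N)) * (c * K0) * ((real N + 1) * \<Lambda> ^ N)" by (simp add: mult_ac)
        also have "\<dots> = 2 powr (- real (mm N)) * (4 * M * (1 + c)) * ((real N + 1) * \<Lambda> ^ N)"
          by (simp only: ck)
        also have "\<dots> = (1 + c) * (4 * 2 powr (- real (mm N)) * M * (real N + 1) * \<Lambda> ^ N)"
          by (simp add: mult_ac)
        finally show ?thesis by (rule sym)
      qed
      also have "\<dots> \<le> 2 powr (- real (mm N)) * c * (2 powr real (mm N) * \<mu> N)"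
        using A2 c0 by (intro mult_left_mono) auto
      also have "\<dots> = c * \<mu> N"
      proof -
        have "2 powr (- real (mm N)) * 2 powr real (mm N) = 1" by (simp add: powr_add[symmetric])
        thus ?thesis by algebra
      qed
      finally have key: "(1 + c) * (4 * 2 powr (- real (mm N)) * M * (real N + 1) * \<Lambda> ^ N) \<le> c * \<mu> N" .
      have key': "(1 + c) * (4 * 2 powr (- real (mm N)) * M * real (N + 1) * \<Lambda> ^ N) \<le> c * \<mu> N"
        using key by (simp add: add.commute)
      show ?thesis
        by (rule adm_suff[OF Lip LG L1 Lbb maps M rde x xhN m1 mule[of N] key' c_def])
    qed
    have mmin: "m_min f Lb rd x N p \<le> mm N" for N
      unfolding m_min_def by (rule Least_le, rule adm)
    have ev: "\<forall>\<epsilon>>0. eventually (\<lambda>N. (\<exists>m. admissible f Lb rd x N p m) \<and>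
                 real (m_min f Lb rd x N p) \<le> (C + \<epsilon>) * real N) sequentially"
    proof (intro allI impI)
      fix \<epsilon> :: real assume e: "\<epsilon> > 0"
      have "eventually (\<lambda>N. real (mm N) \<le> (C + \<epsilon>) * real N) sequentially"
        using as(2) e unfolding C_def by blast
      thus "eventually (\<lambda>N. (\<exists>m. admissible f Lb rd x N p m) \<and>
                 real (m_min f Lb rd x N p) \<le> (C + \<epsilon>) * real N) sequentially"
        by eventually_elim (meson adm mmin order.trans of_nat_le_iff)
    qed
    show ?thesis by (rule ev)
    qed
    have sig: "sigma_p f Lb rd x q \<le> ereal C" for q
    proof -
      have "sigma_p f Lb rd x q \<le> ereal C + ereal \<epsilon>" if e: "\<epsilon> > 0" for \<epsilon>
      proof -
        have "eventually (\<lambda>N. real (m_min f Lb rd x N q) \<le> (C + \<epsilon>) * real N) sequentially"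
          using evq[of q] e by (auto elim: eventually_mono)
        hence "eventually (\<lambda>N. ereal (real (m_min f Lb rd x N q) / real N) \<le> ereal (C + \<epsilon>)) sequentially"
          using eventually_gt_at_top[of 0]
        proof eventually_elim
          case (elim N)
          hence "real (m_min f Lb rd x N q) / real N \<le> C + \<epsilon>" by (simp add: pos_divide_le_eq)
          thus ?case by simp
        qed
        hence "limsup (\<lambda>N. ereal (real (m_min f Lb rd x N q) / real N)) \<le> ereal (C + \<epsilon>)"
          by (rule Limsup_bounded)
        thus ?thesis unfolding sigma_p_def by simp
      qed
      thus ?thesis by (rule ereal_le_epsilon2)
    qed
    have lim3: "\<forall>l. ((\<lambda>q. sigma_p f Lb rd x q) \<longlongrightarrow> l) at_top \<longrightarrow> l \<le> ereal C"
    proof (intro allI impI)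
      fix l assume "((\<lambda>q. sigma_p f Lb rd x q) \<longlongrightarrow> l) at_top"
      thus "l \<le> ereal C"
        by (rule tendsto_upperbound) (use sig in auto)
    qed
    show "(\<forall>\<epsilon>>0. eventually (\<lambda>N. (\<exists>m. admissible f Lb rd x N p0 m) \<and>
                 real (m_min f Lb rd x N p0) \<le> (C + \<epsilon>) * real N) sequentially)
            \<and> sigma_p f Lb rd x p0 \<le> ereal C
            \<and> (\<forall>l. ((\<lambda>q. sigma_p f Lb rd x q) \<longlongrightarrow> l) at_top \<longrightarrow> l \<le> ereal C)"
      using evq[of p0] sig[of p0] lim3 by blast
  qed
qed


end
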